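(* Let $(\lambda_k)_{k\in\mathbb{N}}$ be a decreasing sequence of positive numbers with $\lambda_k\to0$, and for each $k$ let $x^k$ be any stationary point of problem (P$_{\lambda_k}$). Then $(x^k)$ is bounded. Furthermore, suppose $\mathrm{int}\,D\cap\mathrm{int}\{x:Ax\in C\}\ne\emptyset$ and there exists $\hat x\in D$ with $A\hat x\in C$ such that $Q_{\lambda_k}(x^k)/\lambda_k\le\|\hat x\|_1/\|\hat x\|_2$ for all $k\in\mathbb{N}$. Then every accumulation point $x^\star$ of $(x^k)$ satisfies: (i) $x^\star\in D$ and $Ax^\star\in C$; (ii) $x^\star$ is a stationary point of problem (P).
   Context: Let $A\in\mathbb{R}^{m\times n}$, $b\in\mathbb{R}^m$, $\epsilon\ge0$ with $\|b\|_2>\epsilon$, $d>0$. $C:=\{y\in\mathbb{R}^m:\|y-b\|_2\le\epsilon\}$, $D:=\{x\in\mathbb{R}^n:\|x\|_2\le d\}$; $\iota_S$ is the indicator function of $S$. $\mathrm{env}(y):=\frac12((\|y-b\|_2-\epsilon)_+)^2$. $Q_\lambda(x):=(\lambda\|x\|_1+\mathrm{env}(Ax))/\|x\|_2$ on $D\setminus\{0_n\}$, $+\infty$ elsewhere. Problem (P): minimize $\|x\|_1/\|x\|_2$ subject to $\|Ax-b\|_2\le\epsilon$, $\|x\|_2\le d$, with extended objective $\Phi(x):=\|x\|_1/\|x\|_2+\iota_D(x)+\iota_C(Ax)$ for $x\ne0_n$, $\Phi(0_n)=+\infty$. Problem (P$_\lambda$): minimize $Q_\lambda$. Fréchet subdifferential: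 $\hat\partial\varphi(x):=\{v:\liminf_{z\to x,z\ne x}\frac{\varphi(z)-\varphi(x)-\langle v,z-x\rangle}{\|z-x\|_2}\ge0\}$ for $x\in\mathrm{dom}\,\varphi$. A stationary point of (P) (resp. (P$_\lambda$)) is an $x^\star$ with $0\in\hat\partial\Phi(x^\star)$ (resp. $0\in\hat\partial Q_\lambda(x^\star)$). *)

theory Defs
  imports "HOL-Analysis.Analysis"
begin

definition l1norm :: "real^'n \<Rightarrow> real" where
  "l1norm x = (\<Sum>i\<in>UNIV. \<bar>x $ i\<bar>)"

definition Cset :: "real^'m \<Rightarrow> real \<Rightarrow> (real^'m) set" where
  "Cset b \<epsilon> = {y. norm (y - b) \<le> \<epsilon>}"

definition Dset :: "real \<Rightarrow> (real^'n) set" where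
  "Dset d = {x. norm x \<le> d}"

definition env :: "real^'m \<Rightarrow> real \<Rightarrow> real^'m \<Rightarrow> real" where
  "env b \<epsilon> y = (1/2) * (max 0 (norm (y - b) - \<epsilon>))\<^sup>2"

definition Qlam :: "real^'n^'m \<Rightarrow> real^'m \<Rightarrow> real \<Rightarrow> real \<Rightarrow> real \<Rightarrow> real^'n \<Rightarrow> ereal" where
  "Qlam A b \<epsilon> d lam x =
     (if x \<in> Dset d \<and> x \<noteq> 0
      then ereal ((lam * l1norm x + env b \<epsilon> (A *v x)) / norm x)
      else \<infinity>)"

text \<open>Extended objective of (P).\<close>
definition Phi :: "real^'n^'m \<Rightarrow> real^'m \<Rightarrow> real \<Rightarrow> real \<Rightarrow> real^'n \<Rightarrow> ereal" where
  "Phi A b \<epsilon> d x =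
     (if x \<noteq> 0 \<and> x \<in> Dset d \<and> A *v x \<in> Cset b \<epsilon>
      then ereal (l1norm x / norm x)
      else \<infinity>)"

definition frechet_subdiff :: "('a::real_inner \<Rightarrow> ereal) \<Rightarrow> 'a \<Rightarrow> 'a set" where
  "frechet_subdiff \<phi> x =
     {v. \<bar>\<phi> x\<bar> \<noteq> \<infinity> \<and>
         Liminf (at x) (\<lambda>z. (\<phi> z - \<phi> x - ereal (v \<bullet> (z - x))) / ereal (norm (z - x))) \<ge> 0}"

definition stationary :: "('a::real_inner \<Rightarrow> ereal) \<Rightarrow> 'a \<Rightarrow> bool" where
  "stationary \<phi> x \<longleftrightarrow> 0 \<in> frechet_subdiff \<phi> x"

end

theory Submission
  imports Defs
begin

lemma l1_nonneg: "l1norm x \<ge> 0"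
  unfolding l1norm_def by (simp add: sum_nonneg)

lemma env_nonneg: "env b e y \<ge> 0"
  unfolding env_def by simp

lemma l1_convex:
  fixes x z :: "real^'n"
  assumes "0 \<le> t" "t \<le> 1"
  shows "l1norm ((1-t) *\<^sub>R x + t *\<^sub>R z) \<le> (1-t) * l1norm x + t * l1norm z"
proof -
  have "\<And>i. \<bar>((1-t) *\<^sub>R x + t *\<^sub>R z) $ i\<bar> \<le> (1-t) * \<bar>x$i\<bar> + t * \<bar>z$i\<bar>"
  proof -
    fix i
    have "\<bar>(1-t) * x$i + t * z$i\<bar> \<le> \<bar>(1-t) * x$i\<bar> + \<bar>t * z$i\<bar>" by (rule abs_triangle_ineq)
    also have "\<dots> = (1-t) * \<bar>x$i\<bar> + t * \<bar>z$i\<bar>" using assms by (simp add: abs_mult)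
    finally show "\<bar>((1-t) *\<^sub>R x + t *\<^sub>R z) $ i\<bar> \<le> (1-t) * \<bar>x$i\<bar> + t * \<bar>z$i\<bar>" by simp
  qed
  then have "l1norm ((1-t) *\<^sub>R x + t *\<^sub>R z) \<le> (\<Sum>i\<in>UNIV. (1-t) * \<bar>x$i\<bar> + t * \<bar>z$i\<bar>)"
    unfolding l1norm_def by (intro sum_mono) auto
  also have "\<dots> = (1-t) * l1norm x + t * l1norm z"
    unfolding l1norm_def by (simp add: sum.distrib sum_distrib_left)
  finally show ?thesis .
qed

lemma sq_convex:
  fixes p q t :: real
  assumes "0 \<le> t" "t \<le> 1" "0 \<le> p" "0 \<le> q"
  shows "((1-t)*p + t*q)\<^sup>2 \<le> (1-t)*p\<^sup>2 + t*q\<^sup>2"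
proof -
  have "(1-t)*p\<^sup>2 + t*q\<^sup>2 - ((1-t)*p + t*q)\<^sup>2 = t*(1-t)*(p-q)\<^sup>2"
    by (simp add: power2_eq_square algebra_simps)
  moreover have "t*(1-t)*(p-q)\<^sup>2 \<ge> 0" using assms by simp
  ultimately show ?thesis by linarith
qed

lemma env_convex:
  fixes y u :: "real^'m"
  assumes "0 \<le> t" "t \<le> 1"
  shows "env b e ((1-t) *\<^sub>R y + t *\<^sub>R u) \<le> (1-t) * env b e y + t * env b e u"
proof -
  define h where "h s = max 0 (s - e)" for s :: real
  have "(1-t) *\<^sub>R y + t *\<^sub>R u - b = (1-t) *\<^sub>R (y - b) + t *\<^sub>R (u - b)"
    by (simp add: algebra_simps)
  then have n: "norm ((1-t) *\<^sub>R y + t *\<^sub>R u - b) \<le> (1-t) * norm (y - b) + t * norm (u - b)"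
    using assms by (metis (no_types) abs_of_nonneg diff_ge_0_iff_ge norm_scaleR norm_triangle_ineq)
  have h1: "h (norm ((1-t) *\<^sub>R y + t *\<^sub>R u - b)) \<le> (1-t) * h (norm (y - b)) + t * h (norm (u-b))"
  proof -
    have "h (norm ((1-t) *\<^sub>R y + t *\<^sub>R u - b)) \<le> h ((1-t) * norm (y - b) + t * norm (u - b))"
      using n unfolding h_def by auto
    also have "\<dots> \<le> (1-t) * h (norm (y - b)) + t * h (norm (u-b))"
    proof -
      have a: "(1-t) * norm (y - b) + t * norm (u - b) - e = (1-t) * (norm (y - b) - e) + t * (norm (u - b) - e)"
        by (simp add: algebra_simps)
      have b1: "(1-t) * (norm (y - b) - e) \<le> (1-t) * h (norm (y - b))"
        using assms unfolding h_def by (intro mult_left_mono) auto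
      have b2: "t * (norm (u - b) - e) \<le> t * h (norm (u - b))"
        using assms unfolding h_def by (intro mult_left_mono) auto
      have b3: "0 \<le> (1-t) * h (norm (y - b)) + t * h (norm (u-b))"
        using assms unfolding h_def by simp
      show ?thesis using a b1 b2 b3 unfolding h_def by simp
    qed
    finally show ?thesis .
  qed
  have "(h (norm ((1-t) *\<^sub>R y + t *\<^sub>R u - b)))\<^sup>2 \<le> ((1-t) * h (norm (y - b)) + t * h (norm (u-b)))\<^sup>2"
    using h1 by (intro power_mono) (auto simp: h_def)
  also have "\<dots> \<le> (1-t) * (h (norm (y - b)))\<^sup>2 + t * (h (norm (u-b)))\<^sup>2"
    using assms by (intro sq_convex) (auto simp: h_def)
  finally have "(h (norm ((1-t) *\<^sub>R y + t *\<^sub>R u - b)))\<^sup>2 \<le> (1-t) * (h (norm (y - b)))\<^sup>2 + t * (h (norm (u-b)))\<^sup>2" .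
  then show ?thesis unfolding env_def h_def[symmetric] by (simp add: field_simps)
qed

lemma N_convex:
  fixes x z :: "real^'n" and A :: "real^'n^'m"
  assumes "0 \<le> t" "t \<le> 1" "lam \<ge> 0"
  shows "lam * l1norm ((1-t) *\<^sub>R x + t *\<^sub>R z) + env b e (A *v ((1-t) *\<^sub>R x + t *\<^sub>R z))
     \<le> (1-t) * (lam * l1norm x + env b e (A *v x)) + t * (lam * l1norm z + env b e (A *v z))"
proof -
  have Av: "A *v ((1-t) *\<^sub>R x + t *\<^sub>R z) = (1-t) *\<^sub>R (A *v x) + t *\<^sub>R (A *v z)"
    by (simp add: matrix_vector_right_distrib matrix_vector_mult_scaleR)
  have "lam * l1norm ((1-t) *\<^sub>R x + t *\<^sub>R z) \<le> lam * ((1-t) * l1norm x + t * l1norm z)"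
    using assms l1_convex[OF assms(1,2)] by (intro mult_left_mono) auto
  moreover have "env b e (A *v ((1-t) *\<^sub>R x + t *\<^sub>R z)) \<le> (1-t) * env b e (A *v x) + t * env b e (A *v z)"
    unfolding Av by (rule env_convex[OF assms(1,2)])
  ultimately show ?thesis by (simp add: algebra_simps)
qed

lemma stat_Q:
  fixes x :: "real^'n" and A :: "real^'n^'m"
  assumes st: "stationary (Qlam A b e d lam) x" and lp: "lam > 0"
  shows "x \<in> Dset d \<and> x \<noteq> 0 \<and> (\<forall>z\<in>Dset d. lam * l1norm z + env b e (A *v z) \<ge>
     ((lam * l1norm x + env b e (A *v x)) / norm x) * inner z x / norm x)"
proof -
  define N where "N w = lam * l1norm w + env b e (A *v w)" for w
  define M where "M = N x / norm x"
  have fin: "\<bar>Qlam A b e d lam x\<bar> \<noteq> \<infinity>" and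
    lim: "0 \<le> Liminf (at x) (\<lambda>w. (Qlam A b e d lam w - Qlam A b e d lam x - ereal (0 \<bullet> (w - x))) / ereal (norm (w - x)))"
    using st unfolding stationary_def frechet_subdiff_def by auto
  from fin have xD: "x \<in> Dset d" and x0: "x \<noteq> 0" unfolding Qlam_def by (auto split: if_splits)
  have Qx: "Qlam A b e d lam x = ereal M" using xD x0 unfolding Qlam_def M_def N_def by simp
  have nx: "norm x > 0" using x0 by simp
  have Nnn: "N w \<ge> 0" for w unfolding N_def using lp l1_nonneg[of w] env_nonneg[of b e "A *v w"] by simp
  have Mnn: "M \<ge> 0" unfolding M_def using Nnn[of x] nx by simp
  have Nx: "N x = M * norm x" unfolding M_def using nx by simp
  have "N z \<ge> M * inner z x / norm x" if zD: "z \<in> Dset d" for z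
  proof (rule ccontr)
    assume neg: "\<not> N z \<ge> M * inner z x / norm x"
    define K where "K = N z - M * inner z x / norm x"
    have K: "K < 0" using neg unfolding K_def by simp
    have zx: "z \<noteq> x" using K Nx x0 unfolding K_def by (auto simp: dot_square_norm power2_eq_square)
    define c where "c = norm (z - x)"
    have c: "c > 0" using zx unfolding c_def by simp
    define B where "B = norm x + c"
    have B: "B > 0" using nx c unfolding B_def by linarith
    define y0 where "y0 = K / (B * c)"
    have y0: "y0 < 0" unfolding y0_def using K B c by (simp add: divide_neg_pos)
    from lim have "\<forall>\<^sub>F w in at x. ereal y0 < (Qlam A b e d lam w - Qlam A b e d lam x - ereal (0 \<bullet> (w - x))) / ereal (norm (w - x))"
      unfolding le_Liminf_iff using y0 by auto
    then obtain \<delta> where dl: "\<delta> > 0" and ev: "\<And>w. w \<noteq> x \<Longrightarrow> dist w x < \<delta> \<Longrightarrow>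
       ereal y0 < (Qlam A b e d lam w - Qlam A b e d lam x - ereal (0 \<bullet> (w - x))) / ereal (norm (w - x))"
      unfolding eventually_at by auto
    define t where "t = min 1 (min (\<delta> / (2*c)) (norm x / (2*c)))"
    have t0: "t > 0" unfolding t_def using dl c nx by simp
    have t1: "t \<le> 1" unfolding t_def by simp
    have tc1: "t * c < \<delta>"
    proof -
      have "t * c \<le> (\<delta> / (2*c)) * c" unfolding t_def using c by (intro mult_right_mono) auto
      also have "\<dots> = \<delta>/2" using c by simp
      finally show ?thesis using dl by linarith
    qed
    have tc2: "t * c < norm x"
    proof -
      have "t * c \<le> (norm x / (2*c)) * c" unfolding t_def using c by (intro mult_right_mono) auto
      also have "\<dots> = norm x/2" using c by simp
      finally show ?thesis using nx by linarith
    qed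
    define w where "w = (1-t) *\<^sub>R x + t *\<^sub>R z"
    have wx: "w - x = t *\<^sub>R (z - x)" unfolding w_def by (simp add: algebra_simps)
    have nwx: "norm (w - x) = t * c" unfolding wx c_def using t0 by simp
    have wnx: "w \<noteq> x" using nwx t0 c by auto
    have w0: "w \<noteq> 0"
    proof
      assume "w = 0"
      then have "norm (w - x) = norm x" by simp
      then show False using nwx tc2 by simp
    qed
    have nw: "norm w > 0" using w0 by simp
    have nwB: "norm w \<le> B"
    proof -
      have "norm w = norm (x + (w - x))" by simp
      also have "\<dots> \<le> norm x + norm (w - x)" by (rule norm_triangle_ineq)
      also have "\<dots> \<le> B" unfolding B_def nwx using t1 c by (simp add: mult_left_le_one_le)
      finally show ?thesis .
    qed
    have wD: "w \<in> Dset d"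
    proof -
      have "norm w \<le> norm ((1-t) *\<^sub>R x) + norm (t *\<^sub>R z)" unfolding w_def by (rule norm_triangle_ineq)
      also have "\<dots> = (1-t) * norm x + t * norm z" using t0 t1 by simp
      also have "\<dots> \<le> (1-t) * d + t * d" using xD zD t0 t1 unfolding Dset_def
        by (intro add_mono mult_left_mono) auto
      finally show ?thesis unfolding Dset_def by (simp add: algebra_simps)
    qed
    have Qw: "Qlam A b e d lam w = ereal (N w / norm w)" using wD w0 unfolding Qlam_def N_def by simp
    have Nw: "N w \<le> (1-t) * N x + t * N z" unfolding N_def w_def using N_convex[OF _ t1, of lam] t0 lp by simp
    have CS: "inner w x / norm x \<le> norm w"
      using Cauchy_Schwarz_ineq2[of w x] nx by (simp add: divide_le_eq)
    have iw: "inner w x = (1-t) * (norm x)^2 + t * inner z x"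
      unfolding w_def by (simp add: inner_add_left power2_norm_eq_inner)
    have "N w - M * norm w \<le> (1-t) * N x + t * N z - M * (inner w x / norm x)"
      using Nw CS Mnn by (smt (verit) mult_left_mono)
    also have "\<dots> = t * K" unfolding K_def Nx iw using nx
      by (simp add: field_simps power2_eq_square)
    finally have NK: "N w - M * norm w \<le> t * K" .
    have "(N w / norm w - M) / (t * c) = (N w - M * norm w) / (norm w * t * c)"
      using nw t0 c by (simp add: field_simps)
    also have "\<dots> \<le> t * K / (norm w * t * c)"
      using NK nw t0 c by (intro divide_right_mono) auto
    also have "\<dots> = K / (norm w * c)" using t0 by simp
    also have "\<dots> \<le> K / (B * c)"
      using K nw nwB c B by (intro divide_left_mono_neg mult_right_mono) (auto simp: zero_less_mult_iff)
    finally have le: "(N w / norm w - M) / (t * c) \<le> y0" unfolding y0_def .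
    have "ereal y0 < (Qlam A b e d lam w - Qlam A b e d lam x - ereal (0 \<bullet> (w - x))) / ereal (norm (w - x))"
      using ev[OF wnx] tc1 nwx by (simp add: dist_norm)
    also have "\<dots> = ereal ((N w / norm w - M) / (t * c))"
      unfolding Qw Qx nwx using t0 c by simp
    finally show False using le by simp
  qed
  then show ?thesis using xD x0 unfolding N_def M_def by auto
qed

lemma key_ineq:
  fixes w xs :: "real^'n"
  assumes w0: "w \<noteq> 0" and x0: "xs \<noteq> 0" and c: "c = l1norm xs / (norm xs)\<^sup>2"
    and key: "l1norm w \<ge> c * inner xs w"
  shows "l1norm w / norm w - l1norm xs / norm xs \<ge> - c * (norm (w - xs))\<^sup>2 / (2 * norm w)"
proof -
  have nw: "norm w > 0" and nx: "norm xs > 0" using w0 x0 by auto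
  have c0: "c \<ge> 0" unfolding c using l1_nonneg[of xs] by simp
  have f0: "l1norm xs / norm xs = c * norm xs" unfolding c using nx by (simp add: power2_eq_square)
  have r2: "(norm (w - xs))\<^sup>2 = (norm w)\<^sup>2 - 2 * inner xs w + (norm xs)\<^sup>2"
    by (simp add: power2_norm_eq_inner inner_diff_left inner_diff_right inner_commute)
  have am: "2 * norm w * norm xs \<le> (norm w)\<^sup>2 + (norm xs)\<^sup>2"
    using sum_squares_bound[of "norm w" "norm xs"] by (simp add: power2_eq_square algebra_simps)
  then have g: "norm xs * norm w - inner xs w \<le> (norm (w - xs))\<^sup>2 / 2" using r2 by (simp add: algebra_simps)
  have "l1norm w / norm w - l1norm xs / norm xs \<ge> c * inner xs w / norm w - c * norm xs"
    using key nw f0 by (simp add: divide_right_mono)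
  moreover have "c * inner xs w / norm w - c * norm xs = - c * (norm xs * norm w - inner xs w) / norm w"
    using nw by (simp add: field_simps)
  moreover have "- c * (norm xs * norm w - inner xs w) / norm w \<ge> - c * ((norm (w - xs))\<^sup>2 / 2) / norm w"
  proof -
    have "c * (norm xs * norm w - inner xs w) \<le> c * ((norm (w - xs))\<^sup>2 / 2)"
      using g c0 by (rule mult_left_mono)
    then have "c * (norm xs * norm w - inner xs w) / norm w \<le> c * ((norm (w - xs))\<^sup>2 / 2) / norm w"
      using nw by (intro divide_right_mono) auto
    then show ?thesis by simp
  qed
  ultimately show ?thesis by simp
qed

lemma stat_Phi:
  fixes xs :: "real^'n" and A :: "real^'n^'m"
  assumes x0: "xs \<noteq> 0" and xD: "xs \<in> Dset d" and xC: "A *v xs \<in> Cset b e"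
    and key: "\<And>z. z \<in> Dset d \<Longrightarrow> A *v z \<in> Cset b e \<Longrightarrow> l1norm z \<ge> (l1norm xs / (norm xs)\<^sup>2) * inner xs z"
  shows "stationary (Phi A b e d) xs"
proof -
  define c where "c = l1norm xs / (norm xs)\<^sup>2"
  have nx: "norm xs > 0" using x0 by simp
  have c0: "c \<ge> 0" unfolding c_def using l1_nonneg[of xs] by simp
  define f0 where "f0 = l1norm xs / norm xs"
  have Px: "Phi A b e d xs = ereal f0" unfolding Phi_def f0_def using x0 xD xC by simp
  have "0 \<le> Liminf (at xs) (\<lambda>w. (Phi A b e d w - Phi A b e d xs - ereal (0 \<bullet> (w - xs))) / ereal (norm (w - xs)))"
    unfolding le_Liminf_iff
  proof (intro allI impI)
    fix y :: ereal assume y: "y < 0"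
    obtain e' where e': "e' > 0" "y < ereal (- e')"
    proof (cases y)
      case (real r) then show ?thesis using y that[of "- r / 2"] by auto
    next
      case PInf then show ?thesis using y by auto
    next
      case MInf then show ?thesis using that[of 1] by auto
    qed
    define \<delta> where "\<delta> = min (norm xs / 2) (e' * norm xs / (c + 1))"
    have dl: "\<delta> > 0" unfolding \<delta>_def using nx e' c0 by simp
    show "\<forall>\<^sub>F w in at xs. y < (Phi A b e d w - Phi A b e d xs - ereal (0 \<bullet> (w - xs))) / ereal (norm (w - xs))"
      unfolding eventually_at
    proof (intro exI[of _ \<delta>] conjI ballI impI dl)
      fix w :: "real^'n" assume "w \<in> UNIV" and wd: "w \<noteq> xs \<and> dist w xs < \<delta>"
      define r where "r = norm (w - xs)"
      have r: "r > 0" "r < \<delta>" using wd unfolding r_def by (auto simp: dist_norm)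
      show "y < (Phi A b e d w - Phi A b e d xs - ereal (0 \<bullet> (w - xs))) / ereal (norm (w - xs))"
      proof (cases "w \<noteq> 0 \<and> w \<in> Dset d \<and> A *v w \<in> Cset b e")
        case False
        then have "Phi A b e d w = \<infinity>" unfolding Phi_def by auto
        then have "(Phi A b e d w - Phi A b e d xs - ereal (0 \<bullet> (w - xs))) / ereal (norm (w - xs)) = \<infinity>"
          using r unfolding Px r_def by simp
        then show ?thesis using y by (cases y) auto
      next
        case True
        have nw: "norm w \<ge> norm xs / 2"
        proof -
          have "norm xs \<le> norm w + norm (w - xs)" by (metis norm_triangle_sub add.commute norm_minus_commute)
          then show ?thesis using r unfolding r_def \<delta>_def by linarith
        qed
        have nwp: "norm w > 0" using nw nx by linarith
        have ki: "l1norm w / norm w - f0 \<ge> - c * r\<^sup>2 / (2 * norm w)"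
          unfolding f0_def r_def using key_ineq[of w xs c] True x0 key[of w] c_def by simp
        have "(l1norm w / norm w - f0) / r \<ge> (- c * r\<^sup>2 / (2 * norm w)) / r"
          using ki r by (intro divide_right_mono) auto
        moreover have "(- c * r\<^sup>2 / (2 * norm w)) / r = - (c * r / (2 * norm w))"
          using r by (simp add: power2_eq_square)
        moreover have "c * r / (2 * norm w) \<le> c * r / norm xs"
          using nw nx nwp c0 r by (intro divide_left_mono mult_nonneg_nonneg mult_pos_pos) auto
        moreover have "c * r / norm xs < e'"
        proof -
          have "c * r \<le> c * (e' * norm xs / (c + 1))" using r c0 unfolding \<delta>_def by (intro mult_left_mono) auto
          also have "\<dots> < e' * norm xs" using c0 e' nx by (simp add: field_simps)
          finally show ?thesis using nx by (simp add: field_simps)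
        qed
        ultimately have lt: "- e' < (l1norm w / norm w - f0) / r" by linarith
        have "(Phi A b e d w - Phi A b e d xs - ereal (0 \<bullet> (w - xs))) / ereal (norm (w - xs)) = ereal ((l1norm w / norm w - f0) / r)"
        proof -
          have Pw: "Phi A b e d w = ereal (l1norm w / norm w)" using True unfolding Phi_def by simp
          show ?thesis using r unfolding Pw Px r_def by simp
        qed
        then show ?thesis using lt e' by (metis ereal_less_eq(3) less_le_trans order_less_imp_le not_le)
      qed
    qed
  qed
  moreover have "\<bar>Phi A b e d xs\<bar> \<noteq> \<infinity>" unfolding Px by simp
  ultimately show ?thesis unfolding stationary_def frechet_subdiff_def by simp
qed

lemma l1_tendsto:
  fixes f :: "'a \<Rightarrow> real^'n"
  assumes "(f \<longlongrightarrow> a) F" shows "((\<lambda>k. l1norm (f k)) \<longlongrightarrow> l1norm a) F"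
  unfolding l1norm_def by (intro tendsto_sum tendsto_rabs tendsto_vec_nth assms)

lemma env_tendsto:
  fixes f :: "'a \<Rightarrow> real^'n" and A :: "real^'n^'m"
  assumes "(f \<longlongrightarrow> a) F" shows "((\<lambda>k. env b e (A *v f k)) \<longlongrightarrow> env b e (A *v a)) F"
proof -
  have bl: "bounded_linear ((*v) A)" using matrix_vector_mul_linear linear_conv_bounded_linear by blast
  have "((\<lambda>k. A *v f k) \<longlongrightarrow> A *v a) F" by (rule bounded_linear.tendsto[OF bl assms])
  then show ?thesis unfolding env_def by (intro tendsto_intros)
qed

theorem mainTheorem5:
  fixes A :: "real^'n^'m" and b :: "real^'m" and \<epsilon> d :: real
    and lam :: "nat \<Rightarrow> real" and x :: "nat \<Rightarrow> real^'n"
  assumes eps: "\<epsilon> \<ge> 0" and bnorm: "norm b > \<epsilon>" and dpos: "d > 0"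
    and lam_dec: "decseq lam" and lam_pos: "\<And>k. lam k > 0"
    and lam_lim: "lam \<longlonglongrightarrow> 0"
    and stat: "\<And>k. stationary (Qlam A b \<epsilon> d (lam k)) (x k)"
  shows "bounded (range x) \<and>
    ((interior (Dset d) \<inter> interior {z. A *v z \<in> Cset b \<epsilon>} \<noteq> {} \<and>
      (\<exists>xh. xh \<in> Dset d \<and> A *v xh \<in> Cset b \<epsilon> \<and>
         (\<forall>k. Qlam A b \<epsilon> d (lam k) (x k) / ereal (lam k) \<le> ereal (l1norm xh / norm xh))))
     \<longrightarrow> (\<forall>xs r. strict_mono r \<and> (x \<circ> r) \<longlonglongrightarrow> xs \<longrightarrow>
            xs \<in> Dset d \<and> A *v xs \<in> Cset b \<epsilon> \<and> stationary (Phi A b \<epsilon> d) xs))"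
proof -
  define M where "M k = (lam k * l1norm (x k) + env b \<epsilon> (A *v x k)) / norm (x k)" for k
  have xD: "x k \<in> Dset d" and x0: "x k \<noteq> 0"
    and ineq: "\<And>z. z \<in> Dset d \<Longrightarrow> lam k * l1norm z + env b \<epsilon> (A *v z) \<ge> M k * inner z (x k) / norm (x k)" for k
    using stat_Q[OF stat lam_pos, of k] unfolding M_def by auto
  have bd: "bounded (range x)"
  proof -
    have "range x \<subseteq> cball 0 d" using xD unfolding Dset_def by auto
    then show ?thesis using bounded_cball bounded_subset by blast
  qed
  have Qx: "Qlam A b \<epsilon> d (lam k) (x k) = ereal (M k)" for k
    using xD[of k] x0[of k] unfolding Qlam_def M_def by simp
  have part2: "xs \<in> Dset d \<and> A *v xs \<in> Cset b \<epsilon> \<and> stationary (Phi A b \<epsilon> d) xs"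
    if xh: "xh \<in> Dset d" "A *v xh \<in> Cset b \<epsilon>"
       "\<forall>k. Qlam A b \<epsilon> d (lam k) (x k) / ereal (lam k) \<le> ereal (l1norm xh / norm xh)"
     and r: "strict_mono r" and lim: "(x \<circ> r) \<longlonglongrightarrow> xs" for xh xs r
  proof -
    define R where "R = l1norm xh / norm xh"
    have R0: "R \<ge> 0" unfolding R_def using l1_nonneg[of xh] by simp
    have MR: "M k \<le> R * lam k" for k
    proof -
      have "ereal (M k) / ereal (lam k) \<le> ereal R" using xh(3) Qx unfolding R_def by metis
      then have "M k / lam k \<le> R" using lam_pos[of k] by simp
      then show ?thesis using lam_pos[of k] by (simp add: divide_le_eq)
    qed
    have envb: "env b \<epsilon> (A *v x k) \<le> R * lam k * d" for k
    proof -
      have nxk: "norm (x k) > 0" using x0[of k] by simp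
      have "env b \<epsilon> (A *v x k) \<le> M k * norm (x k)"
        unfolding M_def using nxk lam_pos[of k] l1_nonneg[of "x k"] by simp
      also have "\<dots> \<le> R * lam k * norm (x k)" using MR[of k] nxk by (intro mult_right_mono) auto
      also have "\<dots> \<le> R * lam k * d" using xD[of k] R0 lam_pos[of k] unfolding Dset_def
        by (intro mult_left_mono) auto
      finally show ?thesis .
    qed
    have limr: "(\<lambda>k. x (r k)) \<longlonglongrightarrow> xs" using lim by (simp add: comp_def)
    have xsD: "xs \<in> Dset d"
    proof -
      have "(\<lambda>k. norm (x (r k))) \<longlonglongrightarrow> norm xs" by (intro tendsto_norm limr)
      then have "norm xs \<le> d" by (rule LIMSEQ_le_const2) (use xD in \<open>auto simp: Dset_def\<close>)
      then show ?thesis unfolding Dset_def by simp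
    qed
    have lamr: "(\<lambda>k. lam (r k)) \<longlonglongrightarrow> 0" using LIMSEQ_subseq_LIMSEQ[OF lam_lim r] by (simp add: comp_def)
    have "env b \<epsilon> (A *v xs) \<le> 0"
    proof (rule tendsto_le[OF trivial_limit_sequentially])
      show "(\<lambda>k. R * lam (r k) * d) \<longlonglongrightarrow> 0" using tendsto_mult[OF tendsto_mult[OF tendsto_const lamr] tendsto_const, of R d] by simp
      show "(\<lambda>k. env b \<epsilon> (A *v x (r k))) \<longlonglongrightarrow> env b \<epsilon> (A *v xs)" by (rule env_tendsto[OF limr])
      show "\<forall>\<^sub>F k in sequentially. env b \<epsilon> (A *v x (r k)) \<le> R * lam (r k) * d" using envb by simp
    qed
    then have "(max 0 (norm (A *v xs - b) - \<epsilon>))\<^sup>2 \<le> 0" unfolding env_def by simp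
    then have "max 0 (norm (A *v xs - b) - \<epsilon>) = 0" by simp
    then have xsC: "A *v xs \<in> Cset b \<epsilon>" unfolding Cset_def by simp
    have xs0: "xs \<noteq> 0"
    proof
      assume "xs = 0"
      then have "norm (A *v xs - b) = norm b" by simp
      then show False using xsC bnorm unfolding Cset_def by simp
    qed
    have key: "l1norm z \<ge> (l1norm xs / (norm xs)\<^sup>2) * inner xs z"
      if zD: "z \<in> Dset d" and zC: "A *v z \<in> Cset b \<epsilon>" for z
    proof (cases "inner xs z \<le> 0")
      case True
      have "(l1norm xs / (norm xs)\<^sup>2) * inner xs z \<le> 0"
        using True l1_nonneg[of xs] by (intro mult_nonneg_nonpos divide_nonneg_nonneg) auto
      then show ?thesis using l1_nonneg[of z] by linarith
    next
      case False
      have envz: "env b \<epsilon> (A *v z) = 0" using zC unfolding Cset_def env_def by simp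
      have inl: "(\<lambda>k. inner z (x (r k))) \<longlonglongrightarrow> inner z xs" by (intro tendsto_intros limr)
      then have evp: "\<forall>\<^sub>F k in sequentially. 0 < inner z (x (r k))"
        using False by (intro order_tendstoD(1)) (auto simp: inner_commute)
      have gl: "(\<lambda>k. l1norm (x (r k)) * inner z (x (r k)) / (norm (x (r k)))\<^sup>2) \<longlonglongrightarrow> l1norm xs * inner z xs / (norm xs)\<^sup>2"
        using xs0 by (intro tendsto_intros l1_tendsto limr) auto
      have "l1norm xs * inner z xs / (norm xs)\<^sup>2 \<le> l1norm z"
      proof (rule tendsto_le[OF trivial_limit_sequentially tendsto_const gl])
        show "\<forall>\<^sub>F k in sequentially. l1norm (x (r k)) * inner z (x (r k)) / (norm (x (r k)))\<^sup>2 \<le> l1norm z"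
          using evp
        proof eventually_elim
          case (elim k)
          define y where "y = x (r k)"
          define l where "l = lam (r k)"
          have ny: "norm y > 0" using x0 unfolding y_def by simp
          have lp: "l > 0" unfolding l_def using lam_pos by simp
          have ip: "inner z y > 0" using elim unfolding y_def .
          have i1: "l * l1norm z \<ge> M (r k) * inner z y / norm y"
            using ineq[OF zD, of "r k"] envz unfolding y_def l_def by simp
          have Mge: "M (r k) \<ge> l * l1norm y / norm y"
            unfolding M_def y_def[symmetric] l_def[symmetric] using ny env_nonneg[of b \<epsilon> "A *v y"]
            by (simp add: divide_right_mono)
          have "l * (l1norm y * inner z y / (norm y)\<^sup>2) = (l * l1norm y / norm y) * inner z y / norm y"
            using ny by (simp add: power2_eq_square field_simps)
          also have "\<dots> \<le> M (r k) * inner z y / norm y"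
            using Mge ip ny by (intro divide_right_mono mult_right_mono) auto
          also have "\<dots> \<le> l * l1norm z" by (rule i1)
          finally have "l * (l1norm y * inner z y / (norm y)\<^sup>2) \<le> l * l1norm z" .
          then have "l1norm y * inner z y / (norm y)\<^sup>2 \<le> l1norm z" using lp by (rule mult_left_le_imp_le)
          then show ?case unfolding y_def .
        qed
      qed
      then show ?thesis by (simp add: inner_commute)
    qed
    show ?thesis using xsD xsC stat_Phi[OF xs0 xsD xsC key] by auto
  qed
  show ?thesis using bd part2 by blast
qed

end
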